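(* Let $p,n$ be positive integers and $c=\gcd(p,n)$. Then the quandle counting matrix of $\widetilde{\mathcal{T}(p,2)}$ with respect to the dihedral quandle $\mathbb{Z}_n$ is $\Phi^{M_n}_{\mathbb{Z}_n}(\widetilde{\mathcal{T}(p,2)})=cI_n$, where $I_n$ is the $n\times n$ identity matrix.
   Context: $\mathbb{Z}_n=\{0,\dots,n-1\}$ is the dihedral quandle ($x\triangleright y=2y-x$ mod $n$). For a $1$-linkoid $L$ with fundamental pointed quandle $P(L)$ and a finite quandle $X=\{x_1,\dots,x_k\}$, the quandle counting matrix $\Phi^{M_k}_X(L)$ is the $k\times k$ matrix with $(i,j)$ entry $|\hom(P(L),(X,x_i,x_j))|$ (basepoint-preserving homomorphisms). Here $P(\widetilde{\mathcal{T}(p,2)})=(Q,x_1,x_{p+1})$ with $Q=\langle x_1,\dots,x_{p+1}\mid x_p=x_2\triangleright x_{p+1},\ x_i=x_{i+2}\triangleright x_{i+1}\ (1\le i\le p-1)\rangle$, the fundamental pointed quandle of the $1$-linkoid of $(p,2)$-torus type. *)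

theory Defs
  imports Main "HOL-Library.FuncSet" "Jordan_Normal_Form.Matrix"
begin

text \<open>Quandle words over a set of generators: Op s t denotes s \<triangleright> t.\<close>
datatype 'g qterm = Gen 'g | Op "'g qterm" "'g qterm"

fun qeval :: "('a \<Rightarrow> 'a \<Rightarrow> 'a) \<Rightarrow> ('g \<Rightarrow> 'a) \<Rightarrow> 'g qterm \<Rightarrow> 'a" where
  "qeval tr g (Gen a) = g a"
| "qeval tr g (Op s t) = tr (qeval tr g s) (qeval tr g t)"

definition dihedral_op :: "int \<Rightarrow> int \<Rightarrow> int \<Rightarrow> int" where
  "dihedral_op n x y = (2 * y - x) mod n"

definition dihedral_carrier :: "nat \<Rightarrow> int set" where
  "dihedral_carrier n = {0..<int n}"

text \<open>By the universal property of a quandle presentation, such homomorphisms correspond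
  bijectively to generator assignments G \<rightarrow> X satisfying all relations and
  sending the basepoints to y1, y2.\<close>
definition pointed_hom_count ::
  "'g set \<Rightarrow> ('g qterm \<times> 'g qterm) set \<Rightarrow> 'g \<Rightarrow> 'g \<Rightarrow>
   'a set \<Rightarrow> ('a \<Rightarrow> 'a \<Rightarrow> 'a) \<Rightarrow> 'a \<Rightarrow> 'a \<Rightarrow> nat" where
  "pointed_hom_count G R b1 b2 X tr y1 y2 =
     card {g \<in> G \<rightarrow>\<^sub>E X. (\<forall>(s, t) \<in> R. qeval tr g s = qeval tr g t) \<and> g b1 = y1 \<and> g b2 = y2}"

definition counting_matrix ::
  "'g set \<Rightarrow> ('g qterm \<times> 'g qterm) set \<Rightarrow> 'g \<Rightarrow> 'g \<Rightarrow>
   'a list \<Rightarrow> ('a \<Rightarrow> 'a \<Rightarrow> 'a) \<Rightarrow> nat mat" where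
  "counting_matrix G R b1 b2 xs tr =
     mat (length xs) (length xs)
       (\<lambda>(i, j). pointed_hom_count G R b1 b2 (set xs) tr (xs ! i) (xs ! j))"

text \<open>Presentation of the fundamental pointed quandle of the 1-linkoid of (p,2)-torus type:
  generators x_1..x_{p+1}, relations x_p = x_2 \<triangleright> x_{p+1} and
  x_i = x_{i+2} \<triangleright> x_{i+1} for 1 \<le> i \<le> p-1; basepoints x_1, x_{p+1}.\<close>
definition torus_gens :: "nat \<Rightarrow> nat set" where
  "torus_gens p = {1..p+1}"

definition torus_rels :: "nat \<Rightarrow> (nat qterm \<times> nat qterm) set" where
  "torus_rels p = insert (Gen p, Op (Gen 2) (Gen (p+1)))
      {(Gen i, Op (Gen (i+2)) (Gen (i+1))) | i. 1 \<le> i \<and> i \<le> p - 1}"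

definition torus_counting_matrix_dihedral :: "nat \<Rightarrow> nat \<Rightarrow> nat mat" where
  "torus_counting_matrix_dihedral p n =
     counting_matrix (torus_gens p) (torus_rels p) 1 (p+1)
        (map int [0..<n]) (dihedral_op (int n))"

end

theory Submission
  imports Defs
begin


lemma card_D:
  fixes p n :: nat assumes "0 < n"
  shows "card {d. d < n \<and> n dvd p*d} = gcd p n"
proof -
  define c where "c = gcd p n"
  define m where "m = n div c"
  define p' where "p' = p div c"
  have c0: "c > 0" using assms c_def by simp
  have n_eq: "n = m * c" using c_def m_def by simp
  have p_eq: "p = p' * c" using c_def p'_def by simp
  have m0: "m > 0" using n_eq assms by (metis gr0I mult_0)
  have cop: "coprime m p'" using div_gcd_coprime[of p n] assms c_def m_def p'_def
    by (simp add: coprime_commute)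
  have iff: "n dvd p*d \<longleftrightarrow> m dvd d" for d
  proof -
    have "n dvd p*d \<longleftrightarrow> m*c dvd (p'*d)*c" by (simp add: n_eq p_eq algebra_simps)
    also have "\<dots> \<longleftrightarrow> m dvd p'*d" using c0 by simp
    also have "\<dots> \<longleftrightarrow> m dvd d" using cop by (simp add: coprime_dvd_mult_right_iff)
    finally show ?thesis .
  qed
  have "{d. d < n \<and> n dvd p*d} = (\<lambda>j. j*m) ` {..<c}"
  proof (intro Set.set_eqI iffI)
    fix d assume "d \<in> {d. d < n \<and> n dvd p*d}"
    then have "d < n" "m dvd d" using iff by auto
    then obtain j where "d = m*j" by blast
    with \<open>d < n\<close> have "j < c" using n_eq m0 by (simp add: mult.commute)
    then show "d \<in> (\<lambda>j. j*m) ` {..<c}" using \<open>d = m*j\<close> by (auto simp: mult.commute)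
  next
    fix d assume "d \<in> (\<lambda>j. j*m) ` {..<c}"
    then obtain j where j: "j < c" "d = j*m" by auto
    then have "d < n" using n_eq m0 by (simp add: mult.commute)
    moreover have "m dvd d" using j by simp
    ultimately show "d \<in> {d. d < n \<and> n dvd p*d}" using iff by auto
  qed
  moreover have "inj_on (\<lambda>j. j*m) {..<c}" using m0 by (auto simp: inj_on_def)
  ultimately show ?thesis using c_def by (simp add: card_image)
qed



lemma aux: "(2*(x mod N) - y mod N) mod N = (2*x - y) mod (N::int)"
proof -
  have "(2*(x mod N) - y mod N) mod N = (2*(x mod N) - y) mod N" by (rule mod_diff_right_eq)
  also have "\<dots> = ((2*(x mod N)) mod N - y) mod N" by (rule mod_diff_left_eq[symmetric])
  also have "\<dots> = ((2*x) mod N - y) mod N" by (simp add: mod_mult_right_eq)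
  also have "\<dots> = (2*x - y) mod N" by (rule mod_diff_left_eq)
  finally show ?thesis .
qed

lemma rec_lemma:
  fixes g :: "nat \<Rightarrow> int" and N :: int and p :: nat
  assumes R: "\<And>i. 1 \<le> i \<Longrightarrow> i \<le> p - 1 \<Longrightarrow> g i = (2*g(i+1) - g(i+2)) mod N"
  shows "k + 1 \<le> p \<Longrightarrow> g (p+1-k) mod N = (g(p+1) + int k*(g p - g(p+1))) mod N
      \<and> g (p+1-(k+1)) mod N = (g(p+1) + int (k+1)*(g p - g(p+1))) mod N"
proof (induction k)
  case 0
  then show ?case by simp
next
  case (Suc k)
  then have IH1: "g (p+1-k) mod N = (g(p+1) + int k*(g p - g(p+1))) mod N"
    and IH2: "g (p-k) mod N = (g(p+1) + int (k+1)*(g p - g(p+1))) mod N" by auto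
  define i where "i = p - k - 1"
  have i1: "1 \<le> i" "i \<le> p - 1" using Suc.prems i_def by auto
  have e1: "i + 1 = p - k" "i + 2 = p + 1 - k" "p + 1 - (Suc k + 1) = i" "p+1 - Suc k = p - k"
    using Suc.prems i_def by auto
  have "g i mod N = (2*g(p-k) - g(p+1-k)) mod N" using R[OF i1] e1 by simp
  also have "\<dots> = (2*(g(p-k) mod N) - g(p+1-k) mod N) mod N" by (rule aux[symmetric])
  also have "\<dots> = (2*((g(p+1) + int (k+1)*(g p - g(p+1))) mod N) - (g(p+1) + int k*(g p - g(p+1))) mod N) mod N"
    using IH1 IH2 by simp
  also have "\<dots> = (2*(g(p+1) + int (k+1)*(g p - g(p+1))) - (g(p+1) + int k*(g p - g(p+1)))) mod N"
    by (rule aux)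
  also have "\<dots> = (g(p+1) + int (Suc k+1)*(g p - g(p+1))) mod N" by (simp add: algebra_simps)
  finally show ?case using IH2 e1 by simp
qed

lemma rec_closed:
  fixes g :: "nat \<Rightarrow> int" and N :: int and p :: nat
  assumes R: "\<And>i. 1 \<le> i \<Longrightarrow> i \<le> p - 1 \<Longrightarrow> g i = (2*g(i+1) - g(i+2)) mod N"
    and "k \<le> p" and "0 < p"
  shows "g (p+1-k) mod N = (g(p+1) + int k*(g p - g(p+1))) mod N"
proof (cases k)
  case 0 then show ?thesis by simp
next
  case (Suc j) then show ?thesis using rec_lemma[where k=j, OF R] assms(2) by auto
qed


definition Sset :: "nat \<Rightarrow> nat \<Rightarrow> int \<Rightarrow> int \<Rightarrow> (nat \<Rightarrow> int) set" where
  "Sset p n y1 y2 = {g \<in> {1..p+1} \<rightarrow>\<^sub>E {0..<int n}.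
     (g p = (2*g(p+1) - g 2) mod int n \<and> (\<forall>i. 1\<le>i \<and> i\<le>p-1 \<longrightarrow> g i = (2*g(i+1) - g(i+2)) mod int n))
     \<and> g 1 = y1 \<and> g (p+1) = y2}"

definition Gf :: "nat \<Rightarrow> nat \<Rightarrow> int \<Rightarrow> nat \<Rightarrow> (nat \<Rightarrow> int)" where
  "Gf p n a d = restrict (\<lambda>i. (a + int (p+1-i) * int d) mod int n) {1..p+1}"

lemma S_sub:
  fixes p n :: nat and y1 y2 :: int
  assumes "0 < p" "0 < n" and y2: "y2 \<in> {0..<int n}" and gS: "g \<in> Sset p n y1 y2"
  shows "y1 = y2 \<and> (\<exists>d \<in> {d. d < n \<and> n dvd p*d}. g = Gf p n y2 d)"
proof -
  define N where "N = int n"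
  have N0: "N > 0" using assms N_def by simp
  have gext: "g \<in> {1..p+1} \<rightarrow>\<^sub>E {0..<N}" and last: "g p = (2*g(p+1) - g 2) mod N"
    and R: "\<And>i. 1\<le>i \<Longrightarrow> i\<le>p-1 \<Longrightarrow> g i = (2*g(i+1) - g(i+2)) mod N"
    and g1: "g 1 = y1" and gp1: "g (p+1) = y2"
    using gS unfolding Sset_def N_def by auto
  define e where "e = g p - y2"
  define d where "d = nat (e mod N)"
  have de: "int d = e mod N" using N0 d_def by simp
  have "e mod N < N" using N0 by simp
  then have "int d < int n" using de N_def by simp
  then have dlt: "d < n" by simp
  have gm: "g x mod N = g x" if "x \<in> {1..p+1}" for x
    using gext that by (auto simp: PiE_def Pi_def)
  have closed: "g x = (y2 + int (p+1-x) * e) mod N" if "x \<in> {1..p+1}" for x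
  proof -
    have "p + 1 - x \<le> p" using that by auto
    from rec_closed[OF R this \<open>0<p\<close>] have "g (p+1-(p+1-x)) mod N = (g(p+1) + int (p+1-x)*(g p - g(p+1))) mod N" by blast
    moreover have "p+1-(p+1-x) = x" using that by auto
    ultimately show ?thesis using gm[OF that] gp1 e_def by simp
  qed
  have g2: "g 2 = (y2 + int (p - 1) * e) mod N"
    using closed[of 2] \<open>0<p\<close> by (simp add: numeral_2_eq_2)
  have gpe: "g p = (y2 + e) mod N" using closed[of p] \<open>0<p\<close> by simp
  have "(y2 + e) mod N = (2*(y2 mod N) - (y2 + int (p - 1) * e) mod N) mod N"
    using last gpe g2 gp1 gm[of "p+1"] by simp
  also have "\<dots> = (2*y2 - (y2 + int (p - 1) * e)) mod N" by (rule aux)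
  finally have "(y2 + e) mod N = (2*y2 - (y2 + int (p - 1) * e)) mod N" .
  then have "(y2 + e - (2*y2 - (y2 + int (p - 1) * e))) mod N = 0"
    by (simp add: mod_eq_dvd_iff)
  moreover have "y2 + e - (2*y2 - (y2 + int (p - 1) * e)) = int p * e"
    using \<open>0<p\<close> by (simp add: of_nat_diff algebra_simps)
  ultimately have pe: "N dvd int p * e" by (simp add: dvd_eq_mod_eq_0)
  then have "N dvd int p * (e mod N)"
    using mod_mult_right_eq[of "int p" e N] by (simp add: dvd_eq_mod_eq_0)
  then have "int n dvd int (p * d)" using de N_def by simp
  then have dD: "n dvd p * d" by (simp only: of_nat_dvd_iff)
  have "y1 = (y2 + int p * e) mod N" using closed[of 1] g1 by simp
  also have "\<dots> = y2 mod N" using pe by (simp add: mod_add_eq[symmetric])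
  also have "\<dots> = y2" using y2 N_def by simp
  finally have y12: "y1 = y2" .
  have "g = Gf p n y2 d"
  proof (rule ext)
    fix x show "g x = Gf p n y2 d x"
    proof (cases "x \<in> {1..p+1}")
      case True
      have "g x = (y2 + int (p+1-x) * e) mod N" using closed[OF True] .
      also have "\<dots> = (y2 + (int (p+1-x) * e) mod N) mod N" by (rule mod_add_right_eq[symmetric])
      also have "\<dots> = (y2 + (int (p+1-x) * (e mod N)) mod N) mod N" by (simp only: mod_mult_right_eq)
      also have "\<dots> = (y2 + int (p+1-x) * (e mod N)) mod N" by (rule mod_add_right_eq)
      finally show ?thesis using True de N_def by (simp add: Gf_def)
    next
      case False
      then show ?thesis using gext False by (auto simp: Gf_def PiE_def extensional_def)
    qed
  qed
  then show ?thesis using y12 dlt dD by blast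
qed


lemma G_in:
  fixes p n d :: nat and a :: int
  assumes "0 < p" "0 < n" and a: "a \<in> {0..<int n}" and dD: "n dvd p*d"
  shows "Gf p n a d \<in> Sset p n a a"
proof -
  define N where "N = int n"
  have N0: "N > 0" using assms N_def by simp
  let ?G = "Gf p n a d"
  have Gv: "?G x = (a + int (p+1-x) * int d) mod N" if "x \<in> {1..p+1}" for x
    using that by (simp add: Gf_def N_def)
  have pd: "N dvd int p * int d" using dD N_def by (metis of_nat_dvd_iff of_nat_mult)
  have amod: "a mod N = a" using a N_def by simp
  have ext: "?G \<in> {1..p+1} \<rightarrow>\<^sub>E {0..<int n}"
    using N0 N_def by (auto simp: Gf_def PiE_def Pi_def)
  have G1: "?G 1 = a"
  proof -
    have "?G 1 = (a + int p * int d) mod N" using Gv[of 1] by simp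
    also have "\<dots> = a mod N" using pd by (simp add: dvd_eq_mod_eq_0 mod_add_right_eq[symmetric])
    finally show ?thesis using amod by simp
  qed
  have Gp1: "?G (p+1) = a" using Gv[of "p+1"] amod by simp
  have Rel: "?G i = (2*?G(i+1) - ?G(i+2)) mod N" if "1 \<le> i" "i \<le> p - 1" for i
  proof -
    have r: "i \<in> {1..p+1}" "i+1 \<in> {1..p+1}" "i+2 \<in> {1..p+1}" using that by auto
    have "(2*?G(i+1) - ?G(i+2)) mod N
        = (2*((a + int (p+1-(i+1)) * int d) mod N) - (a + int (p+1-(i+2)) * int d) mod N) mod N"
      using Gv[OF r(2)] Gv[OF r(3)] by simp
    also have "\<dots> = (2*(a + int (p+1-(i+1)) * int d) - (a + int (p+1-(i+2)) * int d)) mod N"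
      by (rule aux)
    also have "2*(a + int (p+1-(i+1)) * int d) - (a + int (p+1-(i+2)) * int d) = a + int (p+1-i) * int d"
      using that by (simp add: of_nat_diff algebra_simps)
    finally show ?thesis using Gv[OF r(1)] by simp
  qed
  have Last: "?G p = (2*?G(p+1) - ?G 2) mod N"
  proof -
    have r: "p \<in> {1..p+1}" "2 \<in> {1..p+1}" using \<open>0<p\<close> by auto
    have "(2*?G(p+1) - ?G 2) mod N = (2*(a mod N) - (a + int (p+1-2) * int d) mod N) mod N"
      using Gv[OF r(2)] Gp1 amod by simp
    also have "\<dots> = (2*a - (a + int (p+1-2) * int d)) mod N" by (rule aux)
    also have "2*a - (a + int (p+1-2) * int d) = (a + int d) - int p * int d"
      using \<open>0<p\<close> by (simp add: of_nat_diff algebra_simps)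
    also have "((a + int d) - int p * int d) mod N = (a + int d) mod N"
      using pd by (simp add: dvd_eq_mod_eq_0 mod_diff_right_eq[symmetric])
    finally show ?thesis using Gv[OF r(1)] by simp
  qed
  show ?thesis unfolding Sset_def using ext G1 Gp1 Rel Last N_def by auto
qed

lemma G_inj:
  fixes p n :: nat and a :: int
  assumes "0 < p"
  shows "inj_on (Gf p n a) {d. d < n \<and> n dvd p*d}"
proof (rule inj_onI)
  fix d d' assume d: "d \<in> {d. d < n \<and> n dvd p*d}" and d': "d' \<in> {d. d < n \<and> n dvd p*d}"
    and eq: "Gf p n a d = Gf p n a d'"
  have "p \<in> {1..p+1}" using assms by auto
  then have "(a + int d) mod int n = (a + int d') mod int n"
    using fun_cong[OF eq, of p] by (simp add: Gf_def)
  then have "int n dvd (a + int d) - (a + int d')" by (simp only: mod_eq_dvd_iff)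
  then have "int n dvd int d - int d'" by simp
  then have "int d mod int n = int d' mod int n" by (simp only: mod_eq_dvd_iff)
  then show "d = d'" using d d' by simp
qed

lemma count_S:
  fixes p n :: nat and y1 y2 :: int
  assumes "0 < p" "0 < n" and y1: "y1 \<in> {0..<int n}" and y2: "y2 \<in> {0..<int n}"
  shows "card (Sset p n y1 y2) = (if y1 = y2 then gcd p n else 0)"
proof (cases "y1 = y2")
  case True
  have "Sset p n y1 y2 = Gf p n y2 ` {d. d < n \<and> n dvd p*d}"
    using S_sub[OF assms(1,2) y2] G_in[OF assms(1,2) y2] True by blast
  then have "card (Sset p n y1 y2) = card {d. d < n \<and> n dvd p*d}"
    using G_inj[OF assms(1)] by (simp add: card_image)
  then show ?thesis using True card_D[OF assms(2)] by simp
next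
  case False
  then have "Sset p n y1 y2 = {}" using S_sub[OF assms(1,2) y2] by blast
  then show ?thesis using False by simp
qed


lemma rels_iff:
  "(\<forall>(s, t) \<in> torus_rels p. qeval (dihedral_op N) g s = qeval (dihedral_op N) g t) \<longleftrightarrow>
   (g p = (2*g(p+1) - g 2) mod N \<and> (\<forall>i. 1\<le>i \<and> i\<le>p-1 \<longrightarrow> g i = (2*g(i+1) - g(i+2)) mod N))"
  (is "?L \<longleftrightarrow> ?R")
proof
  assume L: ?L
  have m0: "(Gen p, Op (Gen 2) (Gen (p+1))) \<in> torus_rels p" unfolding torus_rels_def by blast
  have mem: "(Gen i, Op (Gen (i+2)) (Gen (i+1))) \<in> torus_rels p" if "1\<le>i" "i\<le>p-1" for i
    using that unfolding torus_rels_def by blast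
  have "g p = (2*g(p+1) - g 2) mod N" using L m0 by (force simp: dihedral_op_def)
  moreover have "g i = (2*g(i+1) - g(i+2)) mod N" if "1\<le>i" "i\<le>p-1" for i
  proof -
    have "qeval (dihedral_op N) g (Gen i) = qeval (dihedral_op N) g (Op (Gen (i+2)) (Gen (i+1)))"
      using L mem[OF that] by blast
    then show ?thesis by (simp add: dihedral_op_def)
  qed
  ultimately show ?R by blast
next
  assume ?R then show ?L unfolding torus_rels_def dihedral_op_def by auto
qed

lemma set_xs: "set (map int [0..<n]) = {0..<int n}"
proof (intro Set.set_eqI iffI)
  fix x assume "x \<in> {0..<int n}"
  then have "nat x < n" "x = int (nat x)" by auto
  then show "x \<in> set (map int [0..<n])" by (metis atLeastLessThan_iff image_eqI le0 set_map set_upt)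
qed auto

lemma phc:
  assumes "0 < p" "0 < n" "i < n" "j < n"
  shows "pointed_hom_count (torus_gens p) (torus_rels p) 1 (p+1) {0..<int n} (dihedral_op (int n)) (int i) (int j)
     = (if i = j then gcd p n else 0)"
proof -
  have "pointed_hom_count (torus_gens p) (torus_rels p) 1 (p+1) {0..<int n} (dihedral_op (int n)) (int i) (int j)
     = card (Sset p n (int i) (int j))"
    unfolding pointed_hom_count_def Sset_def torus_gens_def rels_iff by simp
  also have "\<dots> = (if int i = int j then gcd p n else 0)"
    using count_S[OF assms(1,2), of "int i" "int j"] assms by simp
  finally show ?thesis by simp
qed

theorem corollary6p7:
  fixes p n :: nat
  assumes "0 < p" and "0 < n"
  shows "torus_counting_matrix_dihedral p n = of_nat (gcd p n) \<cdot>\<^sub>m (1\<^sub>m n :: nat mat)"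
proof (rule eq_matI)
  fix i j assume ij: "i < dim_row (of_nat (gcd p n) \<cdot>\<^sub>m (1\<^sub>m n :: nat mat))"
     "j < dim_col (of_nat (gcd p n) \<cdot>\<^sub>m (1\<^sub>m n :: nat mat))"
  then have i: "i < n" and j: "j < n" by auto
  show "torus_counting_matrix_dihedral p n $$ (i, j) = (of_nat (gcd p n) \<cdot>\<^sub>m (1\<^sub>m n :: nat mat)) $$ (i, j)"
    unfolding torus_counting_matrix_dihedral_def counting_matrix_def set_xs
    using i j phc[OF assms i j] by simp
qed (auto simp: torus_counting_matrix_dihedral_def counting_matrix_def)

end
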